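(* Let $p\in(1/2,1)$, $\alpha=p/(1-p)$, and for $r=1,2,\ldots$ let $\epsilon_r=\dfrac{\alpha-\alpha^{1/r}}{\alpha^{1/r+1}-1}$. Then $(\epsilon_r)_{r\ge1}$ is an increasing sequence, and for every $r\ge1$ and every $\epsilon\in[\epsilon_r,\epsilon_{r+1})$, at least $r+1$ consecutive $Y$ observations are necessary for a $Y$ cascade to begin: on every path of the walk that leaves $[-1,1]$ above $1$ at some step $n$, the last $r+1$ steps (steps $n-r,\ldots,n$) are all up-steps ($Y$ observations).
   Context: Observational learning model: an item has true value $V\in\{G,B\}$; agents arrive sequentially, each receives a private binary signal equal to the "correct" signal with probability $p\in(1/2,1)$, and each agent is independently fake with probability $\epsilon\in[0,1)$ (a fake agent's recorded action is always $Y$ = buy). Define $a=p+(1-p)\epsilon$, $b=p(1-\epsilon)$ and $\eta=\eta(\epsilon)=\log\big(a/(1-b)\big)/\log\alpha\in(0,1]$. Before any cascade, the agents' sufficient statistic $h$ evolves as the following walk: $h_0=0$ and at each step $h$ increases by $\eta$ (an observed $Y$) or decreases by $1$ (an observed $N$); the walk is stopped the first time it leaves $[-1,1]$. Leaving above $1$ is the beginning of a $Y$ cascade, leaving below $-1$ of an $N$ cascade. *)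

theory Defs
  imports Complex_Main
begin

definition alpha :: "real \<Rightarrow> real" where
  "alpha p = p / (1 - p)"

definition eps_r :: "real \<Rightarrow> nat \<Rightarrow> real" where
  "eps_r p r = (alpha p - alpha p powr (1 / real r)) / (alpha p powr (1 / real r + 1) - 1)"

definition eta :: "real \<Rightarrow> real \<Rightarrow> real" where
  "eta p \<epsilon> = (let a = p + (1 - p) * \<epsilon>; b = p * (1 - \<epsilon>) in ln (a / (1 - b)) / ln (alpha p))"

text \<open>A path is a sequence of observations s :: nat => bool (True = Y = up-step by eta,
  False = N = down-step by 1); step i (0-based) is the (i+1)-th observation.
  walk_h p eps s n is the value of h after n steps (before stopping).\<close>
definition walk_h :: "real \<Rightarrow> real \<Rightarrow> (nat \<Rightarrow> bool) \<Rightarrow> nat \<Rightarrow> real" where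
  "walk_h p \<epsilon> s n = (\<Sum>i<n. if s i then eta p \<epsilon> else -1)"

definition leaves_above_at :: "real \<Rightarrow> real \<Rightarrow> (nat \<Rightarrow> bool) \<Rightarrow> nat \<Rightarrow> bool" where
  "leaves_above_at p \<epsilon> s n \<longleftrightarrow>
     walk_h p \<epsilon> s n > 1 \<and> (\<forall>k<n. -1 \<le> walk_h p \<epsilon> s k \<and> walk_h p \<epsilon> s k \<le> 1)"

end

theory Submission
  imports Defs
begin

lemma walk_Suc: "walk_h p e s (Suc n) = walk_h p e s n + (if s n then eta p e else -1)"
  by (simp add: walk_h_def)

lemma walk_bound:
  assumes "eta p e \<le> c" and "-1 \<le> c" and "k \<le> m"
  shows "walk_h p e s m \<le> walk_h p e s k + real (m - k) * c"
  using assms(3)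
proof (induction m rule: dec_induct)
  case base then show ?case by simp
next
  case (step m)
  have "walk_h p e s (Suc m) \<le> walk_h p e s m + c"
    using assms(1,2) by (simp add: walk_Suc)
  moreover have "real (Suc m - k) = real (m - k) + 1" using step.hyps by simp
  ultimately show ?case using step.IH by (simp add: algebra_simps)
qed

lemma fdec:
  fixes A x y :: real
  assumes "A > 1" "1 < y" "y < x"
  shows "(A - x) / (A * x - 1) < (A - y) / (A * y - 1)"
proof -
  have px: "A * x - 1 > 0" and py: "A * y - 1 > 0"
    using less_1_mult[of A x] less_1_mult[of A y] assms by linarith+
  have "(A - x) * (A * y - 1) < (A - y) * (A * x - 1)"
  proof -
    have "(A - y) * (A * x - 1) - (A - x) * (A * y - 1) = (A*A - 1) * (x - y)"
      by (simp add: algebra_simps)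
    moreover have "(A*A - 1) * (x - y) > 0"
    proof -
      have "A*A > 1" using assms(1) using mult_strict_mono[of 1 A 1 A] by simp
      then show ?thesis using assms(3) by simp
    qed
    ultimately show ?thesis by linarith
  qed
  then show ?thesis using px py by (simp add: divide_simps)
qed

theorem lemma2:
  fixes p :: real
  assumes "1/2 < p" and "p < 1"
  shows "strict_mono_on {1..} (eps_r p) \<and>
    (\<forall>r::nat. \<forall>\<epsilon>::real. \<forall>s::nat \<Rightarrow> bool. \<forall>n::nat.
       1 \<le> r \<longrightarrow> 0 \<le> \<epsilon> \<longrightarrow> \<epsilon> < 1 \<longrightarrow>
       eps_r p r \<le> \<epsilon> \<longrightarrow> \<epsilon> < eps_r p (Suc r) \<longrightarrow>
       leaves_above_at p \<epsilon> s n \<longrightarrow>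
       r + 1 \<le> n \<and> (\<forall>i. n - (r + 1) \<le> i \<and> i < n \<longrightarrow> s i))"
proof -
  define A where "A = alpha p"
  have A1: "A > 1" using assms unfolding A_def alpha_def by (simp add: field_simps)
  have epsA: "eps_r p r = (A - A powr (1 / real r)) / (A * A powr (1 / real r) - 1)" for r
    unfolding eps_r_def A_def[symmetric] using A1
    by (simp add: powr_add mult.commute)
  have mono: "strict_mono_on {1..} (eps_r p)"
  proof (rule strict_mono_onI)
    fix m n :: nat assume "m \<in> {1..}" "n \<in> {1..}" "m < n"
    then have m1: "m \<ge> 1" and mn: "m < n" by auto
    have "1 / real n < 1 / real m" using m1 mn by (simp add: frac_less2)
    then have h1: "A powr (1 / real n) < A powr (1 / real m)" using A1 by simp
    have h2: "1 < A powr (1 / real n)" using A1 m1 mn by simp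
    show "eps_r p m < eps_r p n" unfolding epsA using fdec[OF A1 h2 h1] .
  qed
  have main: "r + 1 \<le> n \<and> (\<forall>i. n - (r + 1) \<le> i \<and> i < n \<longrightarrow> s i)"
    if r1: "1 \<le> r" and e0: "0 \<le> e" and e1: "e < 1" and er: "eps_r p r \<le> e"
      and la: "leaves_above_at p e s n" for r e s n
  proof -
    define B where "B = A powr (1 / real r)"
    have B1: "B \<ge> 1" unfolding B_def using A1 r1 by (simp add: ge_one_powr_ge_zero)
    have ABpos: "A * B - 1 > 0" 
    proof -
      have "A * 1 \<le> A * B" using A1 B1 by (intro mult_left_mono) auto
      then show ?thesis using A1 by linarith
    qed
    have "(A - B) / (A * B - 1) \<le> e" using er epsA B_def by simp
    then have "A - B \<le> e * (A * B - 1)" using ABpos by (simp add: divide_simps)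
    then have k1: "A + e \<le> B * (1 + A * e)" by (simp add: algebra_simps)
    have q: "(p + (1 - p) * e) / (1 - p * (1 - e)) = (A + e) / (1 + A * e)"
    proof -
      have p1: "1 - p > 0" using assms by simp
      have n1: "A + e = (p + (1 - p) * e) / (1 - p)"
        using p1 unfolding A_def alpha_def by (simp add: field_simps)
      have n2: "1 + A * e = (1 - p * (1 - e)) / (1 - p)"
        using p1 unfolding A_def alpha_def by (simp add: field_simps)
      show ?thesis unfolding n1 n2 using p1 by simp
    qed
    have pos: "1 + A * e > 0" 
    proof -
      have "A * e \<ge> 0" using A1 e0 by simp
      then show ?thesis by linarith
    qed
    have Ae: "A + e > 0" using A1 e0 by simp
    have rat: "(A + e) / (1 + A * e) \<le> B" using k1 pos by (simp add: divide_simps)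
    have "ln ((A + e) / (1 + A * e)) \<le> ln B"
    proof -
      have qpos: "0 < (A + e) / (1 + A * e)" using Ae pos by (rule divide_pos_pos)
      have "0 < B" using B1 by linarith
      then show ?thesis using ln_le_cancel_iff[OF qpos] rat by blast
    qed
    also have "ln B = ln A / real r" unfolding B_def using A1 by (simp add: ln_powr)
    finally have lnle: "ln ((A + e) / (1 + A * e)) \<le> ln A / real r" .
    have lnA: "ln A > 0" using A1 by simp
    have "ln ((A + e) / (1 + A * e)) / ln A \<le> (ln A / real r) / ln A"
      using lnle lnA by (rule divide_right_mono[OF _ less_imp_le])
    also have "\<dots> = 1 / real r" using lnA by simp
    finally have "ln ((A + e) / (1 + A * e)) / ln A \<le> 1 / real r" .
    then have eta_le: "eta p e \<le> 1 / real r"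
      unfolding eta_def Let_def q A_def[symmetric] by simp
    have c: "-1 \<le> 1 / real r" 
    proof -
      have "0 \<le> 1 / real r" by simp
      then show ?thesis by linarith
    qed
    have hn: "walk_h p e s n > 1" and hk: "\<And>k. k < n \<Longrightarrow> walk_h p e s k \<le> 1"
      using la unfolding leaves_above_at_def by auto
    have rn: "r + 1 \<le> n"
    proof (rule ccontr)
      assume "\<not> r + 1 \<le> n"
      then have "n \<le> r" by simp
      have "walk_h p e s n \<le> walk_h p e s 0 + real (n - 0) * (1 / real r)"
        using walk_bound[OF eta_le c, of 0 n s] by simp
      also have "\<dots> \<le> 1" using \<open>n \<le> r\<close> r1 by (simp add: walk_h_def divide_simps)
      finally show False using hn by simp
    qed
    have "s i" if "n - (r + 1) \<le> i" "i < n" for i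
    proof (rule ccontr)
      assume "\<not> s i"
      then have "walk_h p e s (Suc i) = walk_h p e s i - 1" by (simp add: walk_Suc)
      also have "\<dots> \<le> 0" using hk[OF \<open>i < n\<close>] by simp
      finally have h0: "walk_h p e s (Suc i) \<le> 0" .
      have "walk_h p e s n \<le> walk_h p e s (Suc i) + real (n - Suc i) * (1 / real r)"
        using walk_bound[OF eta_le c, of "Suc i" n s] \<open>i < n\<close> by simp
      also have "real (n - Suc i) * (1 / real r) \<le> 1"
        using that r1 rn by (simp add: divide_simps)
      finally show False using hn h0 by simp
    qed
    then show ?thesis using rn by blast
  qed
  show ?thesis
    apply (intro conjI[OF mono] allI impI)
    apply (rule main)
    by assumption+
qed

end
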